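(* Let $G_1=(V,E_1)$, $G_2=(V,E_2)$, $G_3=(V,E_3)$ be simple graphs on a common vertex set $V$ with $|V|=m$ and $E_1\cap E_2=E_1\cap E_3=\emptyset$. Let $\delta_1$ be the minimum degree of $G_1$, and $\Delta_2,\Delta_3$ the maximum degrees of $G_2,G_3$. Let $\ell\geq 2$ be an integer. Suppose $$m\cdot\frac{3\ell-1}{3\ell}\leq \delta_1 \qquad\text{and}\qquad \Delta_2\Delta_3\leq \frac{m-3}{15\ell^2}.$$ Then there are $\lfloor m/\ell\rfloor$ pairwise vertex-disjoint copies of $K_\ell$ in $G_1$ such that no two of them form an alternating-$(\ell,2,\ell,2)$-bag with $G_2$ and $G_3$.
   Context: Two vertex-disjoint copies $A_1,A_2$ of $K_\ell$ in $G_1$ form an alternating-$(\ell,2,\ell,2)$-bag with $G_2$ and $G_3$ if there exist two vertex-disjoint edges $e_2\in E_2$ and $e_3\in E_3$ each of which joins a vertex of $A_1$ to a vertex of $A_2$. *)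

theory Defs
  imports Complex_Main "HOL-Library.Disjoint_Sets"
begin

definition simple_graph :: "'a set \<Rightarrow> 'a set set \<Rightarrow> bool" where
  "simple_graph V E \<longleftrightarrow> finite V \<and> (\<forall>e\<in>E. e \<subseteq> V \<and> card e = 2)"

definition degree :: "'a set set \<Rightarrow> 'a \<Rightarrow> nat" where
  "degree E v = card {e\<in>E. v \<in> e}"

definition min_degree :: "'a set \<Rightarrow> 'a set set \<Rightarrow> nat" where
  "min_degree V E = Min (degree E ` V)"

definition max_degree :: "'a set \<Rightarrow> 'a set set \<Rightarrow> nat" where
  "max_degree V E = Max (degree E ` V)"

definition clique_copy :: "'a set \<Rightarrow> 'a set set \<Rightarrow> nat \<Rightarrow> 'a set \<Rightarrow> bool" where
  "clique_copy V E l A \<longleftrightarrow> A \<subseteq> V \<and> card A = l \<and>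
     (\<forall>x\<in>A. \<forall>y\<in>A. x \<noteq> y \<longrightarrow> {x, y} \<in> E)"

definition alt_bag :: "'a set set \<Rightarrow> 'a set set \<Rightarrow> 'a set \<Rightarrow> 'a set \<Rightarrow> bool" where
  "alt_bag E2 E3 A1 A2 \<longleftrightarrow>
     (\<exists>e2\<in>E2. \<exists>e3\<in>E3. e2 \<inter> e3 = {} \<and>
        (\<exists>x\<in>A1. \<exists>y\<in>A2. e2 = {x, y}) \<and> (\<exists>x\<in>A1. \<exists>y\<in>A2. e3 = {x, y}))"

end

theory Submission
  imports Defs
begin

lemma card_UN_bound:
  assumes "finite I" "card I \<le> a" "\<And>i. i\<in>I \<Longrightarrow> card (A i) \<le> b"
  shows "card (\<Union>i\<in>I. A i) \<le> a * b"
proof -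
  have "card (\<Union>i\<in>I. A i) \<le> (\<Sum>i\<in>I. card (A i))" by (rule card_UN_le[OF assms(1)])
  also have "\<dots> \<le> card I * b" using sum_bounded_above[of I "\<lambda>i. card (A i)" b] assms(3) by simp
  also have "\<dots> \<le> a * b" using assms(2) by simp
  finally show ?thesis .
qed

locale tri =
  fixes V :: "'a set" and E1 E2 E3 :: "'a set set" and l c s d2 d3 :: nat
  assumes sg1: "simple_graph V E1" and sg2: "simple_graph V E2" and sg3: "simple_graph V E3"
    and d12: "E1 \<inter> E2 = {}" and d13: "E1 \<inter> E3 = {}"
    and l1: "l \<ge> 1" and cl_le: "c * l \<le> card V"
    and nn_le: "\<And>u. u \<in> V \<Longrightarrow> card {v\<in>V. v \<noteq> u \<and> {u,v} \<notin> E1} \<le> s"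
    and n2_le: "\<And>u. card {z. {u,z} \<in> E2} \<le> d2"
    and n3_le: "\<And>u. card {z. {u,z} \<in> E3} \<le> d3"
begin

definition nn :: "'a \<Rightarrow> 'a set" where "nn u = {v\<in>V. v \<noteq> u \<and> {u,v} \<notin> E1}"
definition nb :: "'a set set \<Rightarrow> 'a \<Rightarrow> 'a set" where "nb E u = {z. {u,z} \<in> E}"
definition T where "T = s + 2*l*d2*d3"

definition valid :: "(nat \<Rightarrow> 'a set) \<Rightarrow> bool" where
 "valid S \<longleftrightarrow> (\<forall>i<c. S i \<subseteq> V \<and> card (S i) \<le> l \<and> (\<forall>x\<in>S i. \<forall>y\<in>S i. x \<noteq> y \<longrightarrow> {x,y} \<in> E1)
     \<and> (\<forall>j<c. i \<noteq> j \<longrightarrow> S i \<inter> S j = {} \<and> \<not> alt_bag E2 E3 (S i) (S j)))"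

definition bagblock :: "(nat \<Rightarrow> 'a set) \<Rightarrow> 'a \<Rightarrow> nat \<Rightarrow> bool" where
 "bagblock S u j \<longleftrightarrow> (\<exists>b\<in>S j. \<exists>k<c. \<exists>z\<in>S k. \<exists>z'\<in>S k.
     ({u,z} \<in> E2 \<and> {b,z'} \<in> E3) \<or> ({u,z} \<in> E3 \<and> {b,z'} \<in> E2))"

definition movable where
 "movable S u j \<longleftrightarrow> (\<forall>b\<in>S j. b \<noteq> u \<longrightarrow> {u,b} \<in> E1) \<and> \<not> bagblock S u j"

definition move :: "(nat \<Rightarrow> 'a set) \<Rightarrow> 'a \<Rightarrow> nat \<Rightarrow> nat \<Rightarrow> 'a set" where
 "move S u j = (\<lambda>k. if k = j then insert u (S k) else S k - {u})"

definition cl where "cl S z = \<Union>{S k |k. k < c \<and> z \<in> S k}"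

definition bX where "bX S u = (\<Union>z\<in>nb E2 u. \<Union>z'\<in>cl S z. nb E3 z') \<union> (\<Union>z\<in>nb E3 u. \<Union>z'\<in>cl S z. nb E2 z')"

definition Q where "Q S u = nn u \<union> bX S u"

lemma finV: "finite V" using sg1 unfolding simple_graph_def by auto

lemma valid_sub: "valid S \<Longrightarrow> i < c \<Longrightarrow> S i \<subseteq> V" unfolding valid_def by blast
lemma valid_card: "valid S \<Longrightarrow> i < c \<Longrightarrow> card (S i) \<le> l" unfolding valid_def by blast
lemma valid_fin: "valid S \<Longrightarrow> i < c \<Longrightarrow> finite (S i)" using valid_sub finV finite_subset by blast
lemma valid_indep: "valid S \<Longrightarrow> i < c \<Longrightarrow> x \<in> S i \<Longrightarrow> y \<in> S i \<Longrightarrow> x \<noteq> y \<Longrightarrow> {x,y} \<in> E1"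
  unfolding valid_def by blast
lemma valid_disj: "valid S \<Longrightarrow> i < c \<Longrightarrow> j < c \<Longrightarrow> x \<in> S i \<Longrightarrow> x \<in> S j \<Longrightarrow> i = j"
  unfolding valid_def by blast
lemma valid_nobag: "valid S \<Longrightarrow> i < c \<Longrightarrow> j < c \<Longrightarrow> i \<noteq> j \<Longrightarrow> \<not> alt_bag E2 E3 (S i) (S j)"
  unfolding valid_def by blast

lemma nb_sub: assumes "simple_graph V E" shows "nb E u \<subseteq> V"
  using assms unfolding simple_graph_def nb_def by auto

lemma nb2_fin: "finite (nb E2 u)" using nb_sub[OF sg2] finV finite_subset by blast
lemma nb3_fin: "finite (nb E3 u)" using nb_sub[OF sg3] finV finite_subset by blast

lemma cl_sub: assumes "valid S" shows "cl S z \<subseteq> V"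
  using valid_sub[OF assms] unfolding cl_def by blast

lemma cl_fin: assumes "valid S" shows "finite (cl S z)"
  using cl_sub[OF assms] finV finite_subset by blast

lemma cl_card: assumes v: "valid S" shows "card (cl S z) \<le> l"
proof (cases "\<exists>k<c. z \<in> S k")
  case True
  then obtain k0 where k0: "k0 < c" "z \<in> S k0" by blast
  have "cl S z \<subseteq> S k0"
  proof
    fix x assume "x \<in> cl S z"
    then obtain k where k: "k < c" "z \<in> S k" "x \<in> S k" unfolding cl_def by blast
    have "k = k0" using valid_disj[OF v k(1) k0(1) k(2) k0(2)] .
    then show "x \<in> S k0" using k by simp
  qed
  moreover have "finite (S k0)" using valid_fin[OF v k0(1)] .
  ultimately have "card (cl S z) \<le> card (S k0)" by (rule card_mono[rotated])
  also have "\<dots> \<le> l" using valid_card[OF v k0(1)] .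
  finally show ?thesis .
next
  case False
  then have "cl S z = {}" unfolding cl_def by auto
  then show ?thesis by simp
qed

lemma bX_card: assumes v: "valid S" shows "card (bX S u) \<le> 2*l*d2*d3"
proof -
  have a: "card (\<Union>z\<in>nb E2 u. \<Union>z'\<in>cl S z. nb E3 z') \<le> d2 * (l * d3)"
    apply (rule card_UN_bound)
    using nb2_fin n2_le apply (auto simp: nb_def)[2]
    apply (rule card_UN_bound)
    using cl_fin[OF v] cl_card[OF v] n3_le by (auto simp: nb_def)
  have b: "card (\<Union>z\<in>nb E3 u. \<Union>z'\<in>cl S z. nb E2 z') \<le> d3 * (l * d2)"
    apply (rule card_UN_bound)
    using nb3_fin n3_le apply (auto simp: nb_def)[2]
    apply (rule card_UN_bound)
    using cl_fin[OF v] cl_card[OF v] n2_le by (auto simp: nb_def)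
  have "card (bX S u) \<le> d2 * (l * d3) + d3 * (l * d2)"
    unfolding bX_def using card_Un_le[of "(\<Union>z\<in>nb E2 u. \<Union>z'\<in>cl S z. nb E3 z')" "(\<Union>z\<in>nb E3 u. \<Union>z'\<in>cl S z. nb E2 z')"] a b by linarith
  then show ?thesis by (simp add: algebra_simps)
qed

lemma Q_card: assumes v: "valid S" and u: "u \<in> V" shows "card (Q S u) \<le> T"
proof -
  have "card (Q S u) \<le> card (nn u) + card (bX S u)" unfolding Q_def by (rule card_Un_le)
  then show ?thesis using nn_le[OF u] bX_card[OF v, of u] unfolding T_def nn_def by linarith
qed

lemma Q_fin: assumes v: "valid S" shows "finite (Q S u)"
proof -
  have "Q S u \<subseteq> V" unfolding Q_def nn_def bX_def
    using nb_sub[OF sg2] nb_sub[OF sg3] by blast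
  then show ?thesis using finV finite_subset by blast
qed

lemma not_movable:
  assumes v: "valid S" and u: "u \<in> V" and j: "j < c" and nm: "\<not> movable S u j"
  shows "\<exists>b\<in>S j. b \<in> Q S u \<and> u \<in> Q S b"
proof -
  have Sj: "S j \<subseteq> V" using valid_sub[OF v j] .
  show ?thesis
  proof (cases "\<forall>b\<in>S j. b \<noteq> u \<longrightarrow> {u,b} \<in> E1")
    case False
    then obtain b where b: "b \<in> S j" "b \<noteq> u" "{u,b} \<notin> E1" by blast
    then have "b \<in> nn u" "u \<in> nn b" using Sj u unfolding nn_def by (auto simp: insert_commute)
    then show ?thesis using b unfolding Q_def by blast
  next
    case True
    then have "bagblock S u j" using nm unfolding movable_def by blast
    then obtain b k z z' where b: "b \<in> S j" "k < c" "z \<in> S k" "z' \<in> S k"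
      and e: "({u,z} \<in> E2 \<and> {b,z'} \<in> E3) \<or> ({u,z} \<in> E3 \<and> {b,z'} \<in> E2)"
      unfolding bagblock_def by blast
    have c1: "z' \<in> cl S z" "z \<in> cl S z'" using b unfolding cl_def by blast+
    from e show ?thesis
    proof
      assume h: "{u,z} \<in> E2 \<and> {b,z'} \<in> E3"
      have f: "z \<in> nb E2 u" "b \<in> nb E3 z'" "z' \<in> nb E3 b" "u \<in> nb E2 z"
        unfolding nb_def using h by (simp_all add: insert_commute)
      have "b \<in> bX S u" unfolding bX_def using f c1 by blast
      moreover have "u \<in> bX S b" unfolding bX_def using f c1 by blast
      ultimately show ?thesis using b unfolding Q_def by blast
    next
      assume h: "{u,z} \<in> E3 \<and> {b,z'} \<in> E2"
      have f: "z \<in> nb E3 u" "b \<in> nb E2 z'" "z' \<in> nb E2 b" "u \<in> nb E3 z"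
        unfolding nb_def using h by (simp_all add: insert_commute)
      have "b \<in> bX S u" unfolding bX_def using f c1 by blast
      moreover have "u \<in> bX S b" unfolding bX_def using f c1 by blast
      ultimately show ?thesis using b unfolding Q_def by blast
    qed
  qed
qed


lemma hits_le:
  assumes v: "valid S" and fA: "finite A"
  shows "card {j. j<c \<and> S j \<inter> A \<noteq> {}} \<le> card A"
proof -
  let ?J = "{j. j<c \<and> S j \<inter> A \<noteq> {}}"
  define f where "f j = (SOME b. b \<in> S j \<inter> A)" for j
  have f: "f j \<in> S j \<inter> A" if "j \<in> ?J" for j proof -
    have "S j \<inter> A \<noteq> {}" using that by simp
    then show ?thesis unfolding f_def by (rule some_in_eq[THEN iffD2])
  qed
  have "inj_on f ?J"
  proof (rule inj_onI)
    fix i j assume "i \<in> ?J" "j \<in> ?J" "f i = f j"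
    then show "i = j" using f[of i] f[of j] valid_disj[OF v, of i j "f i"] by auto
  qed
  moreover have "f ` ?J \<subseteq> A" using f by blast
  ultimately show ?thesis using card_inj_on_le fA by blast
qed

lemma blocked_card:
  assumes v: "valid S" and u: "u \<in> V"
  shows "card {j. j<c \<and> \<not> movable S u j} \<le> T"
proof -
  have "{j. j<c \<and> \<not> movable S u j} \<subseteq> {j. j<c \<and> S j \<inter> Q S u \<noteq> {}}"
    using not_movable[OF v u] by blast
  then have "card {j. j<c \<and> \<not> movable S u j} \<le> card {j. j<c \<and> S j \<inter> Q S u \<noteq> {}}"
    by (intro card_mono) auto
  also have "\<dots> \<le> card (Q S u)" by (rule hits_le[OF v Q_fin[OF v]])
  also have "\<dots> \<le> T" by (rule Q_card[OF v u])
  finally show ?thesis .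
qed

lemma blockedv_card:
  assumes v: "valid S" and i: "i < c"
  shows "card {w\<in>V. \<not> movable S w i} \<le> card (S i) * T"
proof -
  have "{w\<in>V. \<not> movable S w i} \<subseteq> (\<Union>b\<in>S i. Q S b)"
    using not_movable[OF v _ i] by blast
  then have "card {w\<in>V. \<not> movable S w i} \<le> card (\<Union>b\<in>S i. Q S b)"
    using Q_fin[OF v] valid_fin[OF v i] by (intro card_mono) auto
  also have "\<dots> \<le> card (S i) * T"
    apply (rule card_UN_bound)
    using valid_fin[OF v i] Q_card[OF v] valid_sub[OF v i] by auto
  finally show ?thesis .
qed

lemma move_nobag:
  assumes v: "valid S" and j: "j<c" and m: "\<not> bagblock S u j"
    and p: "p<c" and q: "q<c" and pq: "p\<noteq>q"
  shows "\<not> alt_bag E2 E3 (move S u j p) (move S u j q)"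
proof
  assume "alt_bag E2 E3 (move S u j p) (move S u j q)"
  then obtain x y x' y' where e2: "{x,y} \<in> E2" and e3: "{x',y'} \<in> E3" and dis: "{x,y} \<inter> {x',y'} = {}"
    and xs: "x \<in> move S u j p" "x' \<in> move S u j p" and ys: "y \<in> move S u j q" "y' \<in> move S u j q"
    unfolding alt_bag_def by blast
  have sub: "\<And>k w. w \<in> move S u j k \<Longrightarrow> w \<noteq> u \<Longrightarrow> w \<in> S k" unfolding move_def by (auto split: if_splits)
  have nu: "\<And>k. u \<in> move S u j k \<Longrightarrow> k = j" unfolding move_def by (auto split: if_splits)
  have d: "x \<noteq> x'" "x \<noteq> y'" "y \<noteq> x'" "y \<noteq> y'" using dis by auto
  show False
  proof (cases "u = x \<or> u = y \<or> u = x' \<or> u = y'")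
    case False
    then have "x \<in> S p" "x' \<in> S p" "y \<in> S q" "y' \<in> S q" using sub xs ys by auto
    then have "alt_bag E2 E3 (S p) (S q)" unfolding alt_bag_def using e2 e3 dis by blast
    with valid_nobag[OF v p q pq] show False by blast
  next
    case True
    then show False
    proof (elim disjE)
      assume ux: "u = x"
      then have pj: "p = j" using nu xs by blast
      then have "y \<noteq> u" "y' \<noteq> u" using nu ys pq by blast+
      then have "x' \<in> S j" "y \<in> S q" "y' \<in> S q" using sub xs ys d ux pj by auto
      then have "bagblock S u j" unfolding bagblock_def using e2 e3 ux q by blast
      with m show False by blast
    next
      assume ux: "u = x'"
      then have pj: "p = j" using nu xs by blast
      then have "y \<noteq> u" "y' \<noteq> u" using nu ys pq by blast+
      then have "x \<in> S j" "y \<in> S q" "y' \<in> S q" using sub xs ys d ux pj by auto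
      then have "bagblock S u j" unfolding bagblock_def using e2 e3 ux q by blast
      with m show False by blast
    next
      assume uy: "u = y"
      then have qj: "q = j" using nu ys by blast
      then have "x \<noteq> u" "x' \<noteq> u" using nu xs pq by blast+
      then have "y' \<in> S j" "x \<in> S p" "x' \<in> S p" using sub xs ys d uy qj by auto
      moreover have "{u,x} \<in> E2" "{y',x'} \<in> E3" using e2 e3 uy by (simp_all add: insert_commute)
      ultimately have "bagblock S u j" unfolding bagblock_def using p by blast
      with m show False by blast
    next
      assume uy: "u = y'"
      then have qj: "q = j" using nu ys by blast
      then have "x \<noteq> u" "x' \<noteq> u" using nu xs pq by blast+
      then have "y \<in> S j" "x \<in> S p" "x' \<in> S p" using sub xs ys d uy qj by auto
      moreover have "{u,x'} \<in> E3" "{y,x} \<in> E2" using e2 e3 uy by (simp_all add: insert_commute)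
      ultimately have "bagblock S u j" unfolding bagblock_def using p by blast
      with m show False by blast
    qed
  qed
qed

lemma move_valid:
  assumes v: "valid S" and j: "j < c" and u: "u \<in> V" and cs: "card (S j) < l" and m: "movable S u j"
  shows "valid (move S u j)"
  unfolding valid_def
proof (intro allI impI conjI)
  fix i assume i: "i < c"
  show "move S u j i \<subseteq> V" using valid_sub[OF v i] u unfolding move_def by auto
  show "card (move S u j i) \<le> l"
  proof (cases "i = j")
    case True
    then show ?thesis using cs valid_fin[OF v j] unfolding move_def by (simp add: card_insert_if)
  next
    case False
    then show ?thesis using valid_card[OF v i] card_Diff1_le[of "S i" u] unfolding move_def by simp
  qed
  show "\<forall>x\<in>move S u j i. \<forall>y\<in>move S u j i. x \<noteq> y \<longrightarrow> {x, y} \<in> E1"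
  proof (cases "i = j")
    case True
    have a: "\<forall>b\<in>S j. b \<noteq> u \<longrightarrow> {u,b} \<in> E1" using m unfolding movable_def by blast
    show ?thesis unfolding move_def using True a valid_indep[OF v j] by (auto simp: insert_commute)
  next
    case False
    then show ?thesis unfolding move_def using valid_indep[OF v i] by auto
  qed
  fix k assume k: "k < c" "i \<noteq> k"
  show "move S u j i \<inter> move S u j k = {}"
    using valid_disj[OF v i k(1)] k(2) unfolding move_def by auto
  show "\<not> alt_bag E2 E3 (move S u j i) (move S u j k)"
    using move_nobag[OF v j _ i k(1) k(2)] m unfolding movable_def by blast
qed

lemma union_move: "j < c \<Longrightarrow> (\<Union>k<c. move S u j k) = insert u (\<Union>k<c. S k)"
  unfolding move_def by (auto split: if_splits)

lemma union_card_le: "valid S \<Longrightarrow> card (\<Union>k<c. S k) \<le> card V"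
  using valid_sub finV by (intro card_mono) auto


lemma augment:
  assumes v: "valid S" and i0: "i0 < c" and d: "card (S i0) < l" and cbig: "2 * T + 2 \<le> c"
  shows "\<exists>S'. valid S' \<and> card (\<Union>k<c. S k) < card (\<Union>k<c. S' k)"
proof -
  let ?U = "\<Union>k<c. S k"
  have finU: "finite ?U" using valid_fin[OF v] by auto
  have "card ?U \<le> (\<Sum>k<c. card (S k))" by (rule card_UN_le) simp
  also have "\<dots> < (\<Sum>k<c. l)"
    by (rule sum_strict_mono_ex1) (use valid_card[OF v] i0 d in auto)
  also have "\<dots> = c * l" by simp
  also have "\<dots> \<le> card V" by (rule cl_le)
  finally have cU: "card ?U < card V" .
  have "\<not> V \<subseteq> ?U"
  proof
    assume "V \<subseteq> ?U"
    then have "card V \<le> card ?U" by (rule card_mono[OF finU])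
    with cU show False by simp
  qed
  then obtain y0 where y0: "y0 \<in> V" "y0 \<notin> ?U" by blast
  show ?thesis
  proof (cases "\<exists>j<c. card (S j) < l \<and> movable S y0 j")
    case True
    then obtain j where j: "j<c" "card (S j) < l" "movable S y0 j" by blast
    have "valid (move S y0 j)" by (rule move_valid[OF v j(1) y0(1) j(2) j(3)])
    moreover have "card ?U < card (\<Union>k<c. move S y0 j k)"
      using union_move[OF j(1)] y0(2) finU by simp
    ultimately show ?thesis by blast
  next
    case False
    define Y where "Y = {j. j<c \<and> \<not> movable S y0 j}"
    have cY: "card Y \<le> T" unfolding Y_def by (rule blocked_card[OF v y0(1)])
    have full: "card (S j) = l" if "j < c" "j \<notin> Y" for j
    proof -
      have "movable S y0 j" using that unfolding Y_def by blast
      then have "\<not> card (S j) < l" using False that(1) by blast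
      then show ?thesis using valid_card[OF v that(1)] by simp
    qed
    define bad where "bad = {w\<in>V. \<not> movable S w i0} \<union> nn y0"
    have finbad: "finite bad" unfolding bad_def nn_def using finV by auto
    have cbad: "card bad \<le> l * T"
    proof -
      have "card bad \<le> card {w\<in>V. \<not> movable S w i0} + card (nn y0)" unfolding bad_def by (rule card_Un_le)
      also have "\<dots> \<le> card (S i0) * T + s" using blockedv_card[OF v i0] nn_le[OF y0(1)] unfolding nn_def by (intro add_mono) auto
      also have "\<dots> \<le> (l - 1) * T + T" using d unfolding T_def by (intro add_mono mult_right_mono) auto
      also have "\<dots> = l * T" using l1 by (cases l) auto
      finally show ?thesis .
    qed
    define AB where "AB = {j. j<c \<and> j \<notin> Y \<and> S j \<subseteq> bad}"
    have finAB: "finite AB" unfolding AB_def by auto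
    have cAB: "card AB \<le> T"
    proof -
      have "card (\<Union>j\<in>AB. S j) = (\<Sum>j\<in>AB. card (S j))"
      proof (rule card_UN_disjoint[OF finAB])
        show "\<forall>i\<in>AB. finite (S i)" using valid_fin[OF v] unfolding AB_def by blast
        show "\<forall>i\<in>AB. \<forall>j\<in>AB. i \<noteq> j \<longrightarrow> S i \<inter> S j = {}"
          using valid_disj[OF v] unfolding AB_def by blast
      qed
      also have "\<dots> = (\<Sum>j\<in>AB. l)" using full unfolding AB_def by (intro sum.cong) auto
      also have "\<dots> = card AB * l" by simp
      finally have e: "card (\<Union>j\<in>AB. S j) = card AB * l" .
      have "(\<Union>j\<in>AB. S j) \<subseteq> bad" unfolding AB_def by blast
      then have "card (\<Union>j\<in>AB. S j) \<le> card bad" using finbad by (rule card_mono[rotated])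
      then have "card AB * l \<le> T * l" using e cbad by (metis le_trans mult.commute)
      then show ?thesis using l1 by (meson mult_le_cancel2 not_one_le_zero not_le le_trans less_le_trans zero_less_one)
    qed
    have "c - card Y - card AB \<le> card ({..<c} - Y - AB)"
    proof -
      have "card {..<c} - card Y \<le> card ({..<c} - Y)" by (rule diff_card_le_card_Diff) (simp add: Y_def)
      moreover have "card ({..<c} - Y) - card AB \<le> card ({..<c} - Y - AB)" by (rule diff_card_le_card_Diff[OF finAB])
      ultimately show ?thesis by simp
    qed
    then have "card ({..<c} - Y - AB) > 0" using cY cAB cbig by linarith
    then obtain j where "j \<in> {..<c} - Y - AB" by (metis card.empty ex_in_conv less_irrefl)
    then have j: "j < c" "j \<notin> Y" "j \<notin> AB" by auto
    have mj: "movable S y0 j" using j unfolding Y_def by blast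
    have fj: "card (S j) = l" using full j by blast
    have ji: "j \<noteq> i0" using fj d by auto
    obtain w where w: "w \<in> S j" "w \<notin> bad" using j unfolding AB_def by blast
    have wV: "w \<in> V" using valid_sub[OF v j(1)] w(1) by blast
    have mw: "movable S w i0" and wn: "w \<notin> nn y0" using w(2) wV unfolding bad_def by auto
    define S1 where "S1 = move S w i0"
    have v1: "valid S1" unfolding S1_def by (rule move_valid[OF v i0 wV d mw])
    have S1j: "S1 j = S j - {w}" unfolding S1_def move_def using ji by simp
    have cS1: "card (S1 j) < l" using S1j fj w(1) valid_fin[OF v j(1)] l1 by simp
    have sub1: "\<And>k. S1 k \<subseteq> insert w (S k)" unfolding S1_def move_def by auto
    have m1: "movable S1 y0 j"
      unfolding movable_def
    proof
      show "\<forall>b\<in>S1 j. b \<noteq> y0 \<longrightarrow> {y0, b} \<in> E1" using mj S1j unfolding movable_def by blast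
      show "\<not> bagblock S1 y0 j"
      proof
        assume "bagblock S1 y0 j"
        then obtain b k z z' where b: "b \<in> S1 j" "k < c" "z \<in> S1 k" "z' \<in> S1 k"
          and e: "({y0,z} \<in> E2 \<and> {b,z'} \<in> E3) \<or> ({y0,z} \<in> E3 \<and> {b,z'} \<in> E2)"
          unfolding bagblock_def by blast
        have bj: "b \<in> S j" "b \<noteq> w" using b(1) S1j by auto
        show False
        proof (cases "z = w")
          case True
          have "{y0,w} \<in> E2 \<or> {y0,w} \<in> E3" using e True by blast
          then have "w \<noteq> y0" "{y0,w} \<notin> E1" using sg2 sg3 d12 d13 unfolding simple_graph_def by auto
          then have "w \<in> nn y0" using wV unfolding nn_def by blast
          with wn show False by blast
        next
          case zw: False
          show False
          proof (cases "z' = w")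
            case True
            have "{b,w} \<in> E1" using valid_indep[OF v j(1) bj(1) w(1) bj(2)] .
            moreover have "{b,w} \<in> E2 \<or> {b,w} \<in> E3" using e True by blast
            ultimately show False using d12 d13 by blast
          next
            case False
            then have "z \<in> S k" "z' \<in> S k" using sub1 b zw by blast+
            then have "bagblock S y0 j" unfolding bagblock_def using bj(1) b(2) e by blast
            with mj show False unfolding movable_def by blast
          qed
        qed
      qed
    qed
    define S2 where "S2 = move S1 y0 j"
    have v2: "valid S2" unfolding S2_def by (rule move_valid[OF v1 j(1) y0(1) cS1 m1])
    have "(\<Union>k<c. S2 k) = insert y0 ?U"
      unfolding S2_def union_move[OF j(1)] S1_def union_move[OF i0] using w(1) j(1) by blast
    then have "card ?U < card (\<Union>k<c. S2 k)" using y0(2) finU by simp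
    with v2 show ?thesis by blast
  qed
qed

lemma exists_full:
  assumes cbig: "2 * T + 2 \<le> c"
  shows "\<exists>S. valid S \<and> (\<forall>i<c. card (S i) = l)"
proof -
  have v0: "valid (\<lambda>_. {})" unfolding valid_def alt_bag_def by auto
  have "\<forall>S. valid S \<longrightarrow> card (\<Union>k<c. S k) < card V + 1" using union_card_le by fastforce
  then obtain S where vS: "valid S" and mx: "\<forall>S'. valid S' \<longrightarrow> card (\<Union>k<c. S' k) \<le> card (\<Union>k<c. S k)"
    using ex_has_greatest_nat[of valid "\<lambda>_. {}" "\<lambda>S. card (\<Union>k<c. S k)" "card V + 1", OF v0] by blast
  have "card (S i) = l" if i: "i < c" for i
  proof (rule ccontr)
    assume "card (S i) \<noteq> l"
    then have "card (S i) < l" using valid_card[OF vS i] by simp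
    then obtain S' where "valid S'" "card (\<Union>k<c. S k) < card (\<Union>k<c. S' k)"
      using augment[OF vS i _ cbig] by blast
    with mx show False by fastforce
  qed
  with vS show ?thesis by blast
qed

end

lemma nbrs_deg:
  assumes sg: "simple_graph V E" and u: "u \<in> V"
  shows "degree E u \<le> card {v\<in>V. v \<noteq> u \<and> {u,v} \<in> E}"
proof -
  have fin: "finite V" using sg unfolding simple_graph_def by blast
  have "{e\<in>E. u \<in> e} \<subseteq> (\<lambda>v. {u,v}) ` {v\<in>V. v \<noteq> u \<and> {u,v} \<in> E}"
  proof
    fix e assume e: "e \<in> {e\<in>E. u \<in> e}"
    then have "card e = 2" "e \<subseteq> V" using sg unfolding simple_graph_def by auto
    then obtain x y where xy: "e = {x,y}" "x \<noteq> y" by (meson card_2_iff)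
    show "e \<in> (\<lambda>v. {u,v}) ` {v\<in>V. v \<noteq> u \<and> {u,v} \<in> E}"
    proof (cases "u = x")
      case True
      then show ?thesis using xy e \<open>e \<subseteq> V\<close> by auto
    next
      case False
      then have "u = y" using xy e by auto
      then have "e = {u,x}" using xy by (simp add: insert_commute)
      then show ?thesis using xy e \<open>e \<subseteq> V\<close> \<open>u = y\<close> by auto
    qed
  qed
  then have "degree E u \<le> card ((\<lambda>v. {u,v}) ` {v\<in>V. v \<noteq> u \<and> {u,v} \<in> E})"
    unfolding degree_def using fin by (intro card_mono) auto
  also have "\<dots> \<le> card {v\<in>V. v \<noteq> u \<and> {u,v} \<in> E}" by (rule card_image_le) (use fin in auto)
  finally show ?thesis .
qed

lemma nb_deg:
  assumes sg: "simple_graph V E" and ne: "V \<noteq> {}"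
  shows "card {z. {u,z} \<in> E} \<le> max_degree V E"
proof (cases "u \<in> V")
  case False
  then have "{z. {u,z} \<in> E} = {}" using sg unfolding simple_graph_def by auto
  then show ?thesis by simp
next
  case True
  have fin: "finite V" using sg unfolding simple_graph_def by blast
  have sub: "{z. {u,z} \<in> E} \<subseteq> V" using sg unfolding simple_graph_def by auto
  have nu: "z \<noteq> u" if "{u,z} \<in> E" for z using that sg unfolding simple_graph_def by fastforce
  have "inj_on (\<lambda>z. {u,z}) {z. {u,z} \<in> E}"
    by (rule inj_onI) (metis doubleton_eq_iff mem_Collect_eq nu)
  moreover have "(\<lambda>z. {u,z}) ` {z. {u,z} \<in> E} \<subseteq> {e\<in>E. u \<in> e}" by auto
  moreover have "finite {e\<in>E. u \<in> e}"
  proof -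
    have "{e\<in>E. u \<in> e} \<subseteq> Pow V" using sg unfolding simple_graph_def by auto
    then show ?thesis using fin finite_subset by blast
  qed
  ultimately have "card {z. {u,z} \<in> E} \<le> degree E u" unfolding degree_def by (rule card_inj_on_le)
  also have "\<dots> \<le> max_degree V E" unfolding max_degree_def using fin True by (intro Max_ge) auto
  finally show ?thesis .
qed

theorem theorem3p1:
  fixes V :: "'a set" and E1 E2 E3 :: "'a set set" and l m :: nat
  assumes "simple_graph V E1" and "simple_graph V E2" and "simple_graph V E3"
    and "card V = m"
    and "E1 \<inter> E2 = {}" and "E1 \<inter> E3 = {}"
    and "l \<ge> 2"
    and "real m * real (3 * l - 1) / real (3 * l) \<le> real (min_degree V E1)"
    and "real (max_degree V E2) * real (max_degree V E3) \<le> (real m - 3) / (15 * real l ^ 2)"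
  shows "\<exists>\<A>. finite \<A> \<and> card \<A> = m div l \<and> (\<forall>A\<in>\<A>. clique_copy V E1 l A) \<and>
           pairwise disjnt \<A> \<and>
           (\<forall>A1\<in>\<A>. \<forall>A2\<in>\<A>. A1 \<noteq> A2 \<longrightarrow> \<not> alt_bag E2 E3 A1 A2)"
proof (cases "V = {}")
  case True
  then have "m = 0" using assms(4) by simp
  then show ?thesis by (intro exI[of _ "{}"]) simp
next
  case ne: False
  note sg1 = assms(1) and sg2 = assms(2) and sg3 = assms(3) and cV = assms(4) and l2 = assms(7)
  have fin: "finite V" using sg1 unfolding simple_graph_def by blast
  define \<delta> where "\<delta> = min_degree V E1"
  define d2 where "d2 = max_degree V E2"
  define d3 where "d3 = max_degree V E3"
  define s where "s = m - 1 - \<delta>"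
  define c where "c = m div l"
  have dmin: "\<delta> \<le> degree E1 u" if "u \<in> V" for u
    unfolding \<delta>_def min_degree_def using fin that by (intro Min_le) auto
  have nn: "card {v\<in>V. v \<noteq> u \<and> {u,v} \<notin> E1} + card {v\<in>V. v \<noteq> u \<and> {u,v} \<in> E1} \<le> m - 1"
    if u: "u \<in> V" for u
  proof -
    have "card {v\<in>V. v \<noteq> u \<and> {u,v} \<notin> E1} + card {v\<in>V. v \<noteq> u \<and> {u,v} \<in> E1}
        = card ({v\<in>V. v \<noteq> u \<and> {u,v} \<notin> E1} \<union> {v\<in>V. v \<noteq> u \<and> {u,v} \<in> E1})"
      by (rule card_Un_disjoint[symmetric]) (use fin in auto)
    also have "\<dots> \<le> card (V - {u})" by (rule card_mono) (use fin in auto)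
    also have "\<dots> = m - 1" using u cV fin by simp
    finally show ?thesis .
  qed
  have nnle: "card {v\<in>V. v \<noteq> u \<and> {u,v} \<notin> E1} \<le> s" if u: "u \<in> V" for u
    using nn[OF u] nbrs_deg[OF sg1 u] dmin[OF u] unfolding s_def by linarith
  obtain u0 where u0: "u0 \<in> V" using ne by blast
  have dle: "\<delta> \<le> m - 1" using nn[OF u0] nbrs_deg[OF sg1 u0] dmin[OF u0] by linarith
  have m1: "m \<ge> 1"
  proof -
    have "card V > 0" using ne fin by (simp add: card_gt_0_iff)
    then show ?thesis using cV by simp
  qed
  have ls: "real s = real m - 1 - real \<delta>" using dle m1 unfolding s_def by (simp add: of_nat_diff)
  have lpos: "real l \<ge> 2" using l2 by simp
  have h1: "real l * (real s + 1) \<le> real m / 3"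
  proof -
    have "real (3*l - 1) = 3 * real l - 1" using l2 by (simp add: of_nat_diff)
    then have a: "real m * (3 * real l - 1) / (3 * real l) \<le> real \<delta>" using assms(8) unfolding \<delta>_def by simp
    have "real m * (3 * real l - 1) / (3 * real l) = real m - real m / (3 * real l)"
      using lpos by (simp add: field_simps)
    then have "real s + 1 \<le> real m / (3 * real l)" using a ls by linarith
    then have "real l * (real s + 1) \<le> real l * (real m / (3 * real l))" using lpos by (intro mult_left_mono) auto
    also have "\<dots> = real m / 3" using lpos by (simp add: field_simps)
    finally show ?thesis .
  qed
  have h2: "15 * real l ^ 2 * (real d2 * real d3) \<le> real m - 3"
  proof -
    have "real d2 * real d3 \<le> (real m - 3) / (15 * real l ^ 2)" using assms(9) unfolding d2_def d3_def by simp
    then show ?thesis using lpos by (simp add: field_simps)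
  qed
  have m3l: "3 * real l \<le> real m"
  proof -
    have "real l * real s \<ge> 0" by simp
    moreover have "real l * (real s + 1) = real l * real s + real l" by (simp add: algebra_simps)
    ultimately have "real l \<le> real m / 3" using h1 by linarith
    then show ?thesis by simp
  qed
  define P where "P = d2 * d3"
  have key: "(2 * (real s + 2 * real l * real P) + 2) * real l \<le> real m - real l + 1"
  proof (cases "P = 0")
    case True
    then show ?thesis using h1 m3l by (simp add: algebra_simps)
  next
    case False
    then have P1: "real P \<ge> 1" by simp
    have "real l ^ 2 * 1 \<le> real l ^ 2 * real P" using P1 by (intro mult_left_mono) auto
    then have "real l ^ 2 \<le> real l ^ 2 * real P" by simp
    also have "15 * (real l ^ 2 * real P) \<le> real m - 3" using h2 unfolding P_def by (simp add: algebra_simps)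
    then have "real l ^ 2 * real P \<le> (real m - 3) / 15" by simp
    finally have a: "real l ^ 2 \<le> (real m - 3) / 15" .
    have "real l \<le> real l ^ 2" using lpos by (simp add: power2_eq_square)
    have b: "4 * (real l * real l * real P) \<le> 4 * ((real m - 3) / 15)"
      using h2 unfolding P_def by (simp add: power2_eq_square algebra_simps)
    have "(2 * (real s + 2 * real l * real P) + 2) * real l = 2 * (real l * (real s + 1)) + 4 * (real l * real l * real P)"
      by (simp add: algebra_simps)
    also have "\<dots> \<le> 2 * (real m / 3) + 4 * ((real m - 3) / 15)" using h1 b by linarith
    also have "\<dots> \<le> real m - real l + 1"
    proof -
      have "real l \<le> (real m - 3) / 15" using a \<open>real l \<le> real l ^ 2\<close> by linarith
      then show ?thesis by (simp add: field_simps)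
    qed
    finally show ?thesis .
  qed
  have keyn: "(2 * (s + 2 * l * P) + 2) * l + l \<le> m + 1"
  proof -
    have e: "real ((2 * (s + 2 * l * P) + 2) * l + l) = (2 * (real s + 2 * real l * real P) + 2) * real l + real l"
      by (simp add: algebra_simps)
    have "real ((2 * (s + 2 * l * P) + 2) * l + l) \<le> real m + 1" using key e by linarith
    then have "real ((2 * (s + 2 * l * P) + 2) * l + l) \<le> real (m + 1)" by simp
    then show ?thesis by (simp only: of_nat_le_iff)
  qed
  have mlt: "m < (c + 1) * l" unfolding c_def using l2
    by (metis add.commute div_mult_mod_eq mod_less_divisor mult_Suc nat_add_left_cancel_less not_numeral_le_zero not_gr_zero plus_1_eq_Suc)
  have cbig: "2 * (s + 2 * l * d2 * d3) + 2 \<le> c"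
  proof -
    have "(2 * (s + 2 * l * P) + 2) * l < (c + 1) * l" using keyn mlt l2 add_mult_distrib[of c 1 l] by linarith
    then have "2 * (s + 2 * l * P) + 2 < c + 1" by (metis mult_less_cancel2)
    then show ?thesis unfolding P_def by (simp add: mult.assoc)
  qed
  interpret t: tri V E1 E2 E3 l c s d2 d3
  proof
    show "1 \<le> l" using l2 by simp
    show "c * l \<le> card V" unfolding c_def cV by simp
    show "\<And>u. u \<in> V \<Longrightarrow> card {v\<in>V. v \<noteq> u \<and> {u,v} \<notin> E1} \<le> s" by (rule nnle)
    show "\<And>u. card {z. {u,z} \<in> E2} \<le> d2" unfolding d2_def by (rule nb_deg[OF sg2 ne])
    show "\<And>u. card {z. {u,z} \<in> E3} \<le> d3" unfolding d3_def by (rule nb_deg[OF sg3 ne])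
  qed (use assms in auto)
  obtain S where vS: "t.valid S" and full: "\<forall>i<c. card (S i) = l"
    using t.exists_full cbig unfolding t.T_def by blast
  have neq: "S i \<noteq> S j" if "i < c" "j < c" "i \<noteq> j" for i j
  proof
    assume e: "S i = S j"
    have "S i \<noteq> {}" using full that(1) l2 by (metis card.empty not_numeral_le_zero)
    then obtain x where "x \<in> S i" by blast
    then show False using t.valid_disj[OF vS that(1) that(2)] e that(3) by auto
  qed
  show ?thesis
  proof (intro exI[of _ "S ` {..<c}"] conjI)
    show "finite (S ` {..<c})" by simp
    have "inj_on S {..<c}" using neq by (meson inj_onI lessThan_iff)
    then show "card (S ` {..<c}) = m div l" unfolding c_def[symmetric] by (simp add: card_image)
    show "\<forall>A\<in>S ` {..<c}. clique_copy V E1 l A"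
      unfolding clique_copy_def using t.valid_sub[OF vS] full t.valid_indep[OF vS] by blast
    show "pairwise disjnt (S ` {..<c})"
      unfolding pairwise_def disjnt_def using t.valid_disj[OF vS] by blast
    show "\<forall>A1\<in>S ` {..<c}. \<forall>A2\<in>S ` {..<c}. A1 \<noteq> A2 \<longrightarrow> \<not> alt_bag E2 E3 A1 A2"
      using t.valid_nobag[OF vS] by blast
  qed
qed

end
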